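(* Let $\mathcal{X}$ be a Polish space with a complete consistent metric $d$, let $\Theta$ be a Polish space, let $\mathcal{P}\colon\Theta\to\mathcal{M}(\mathcal{X})$ be measurable with image $\mathcal{A}_0:=\mathcal{P}(\Theta)$, and assume $\mathcal{P}$ is positive: $\mu(B_\delta(x))>0$ for all $\mu\in\mathcal{A}_0$, $x\in\mathcal{X}$, $\delta>0$. Let $\Pi_\Theta\subseteq\mathcal{M}(\Theta)$, $\Pi_0:=\mathcal{P}\Pi_\Theta\subseteq\mathcal{M}(\mathcal{A}_0)$, and let $\Phi_0\colon\mathcal{M}(\mathcal{X})\to\mathbb{R}$ be measurable and semibounded. Let $\delta>0$ and $0<\alpha<1$ satisfy $\mathcal{P}_\infty(\delta)<\alpha$. Then, for all integers $n\ge1$ and all $(x_1,\dots,x_n)\in\mathcal{X}^n$, \[\mathcal{U}(\Pi_\alpha\,|\,B^n_\delta)\ge\Pi_0^\infty(\Phi_0),\] and similarly $\mathcal{L}(\Pi_\alpha\,|\,B^n_\delta)\le\inf_{\pi\in\Pi_0}\sup\{r\in\mathbb{R}:\pi[\Phi_0<r]=0\}$.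
   Context: $\mathcal{M}(\mathcal{X})$ is the set of Borel probability measures on $\mathcal{X}$ with the weak topology, metrized by the Prokhorov metric $d_{\mathcal{M}}(\mu_1,\mu_2):=\inf\{\varepsilon>0:\mu_1(A)\le\mu_2(A^\varepsilon)+\varepsilon\ \forall A\in\mathcal{B}(\mathcal{X})\}$, $A^\varepsilon=\{x:d(x,x')<\varepsilon\text{ for some }x'\in A\}$. $B_\delta(x)$ is the open $d$-ball of radius $\delta$ about $x$; $B_\alpha(\mu)$ is the open Prokhorov ball. $\mathcal{P}\Pi_\Theta$ is the set of pushforwards. $\mathcal{P}_\infty(\delta):=\sup_{x\in\mathcal{X}}\sup_{\theta\in\Theta}\mathcal{P}(\theta)[B_\delta(x)]$. Let $\mathcal{A}_\alpha:=\bigcup_{\mu\in\mathcal{A}_0}B_\alpha(\mu)$, $\mathcal{A}:=\{(\mu_1,\mu_2)\in\mathcal{M}(\mathcal{X})^2:\mu_1\in\mathcal{A}_0,\ d_{\mathcal{M}}(\mu_1,\mu_2)<\alpha\}$, $P_0(\mu_1,\mu_2)=\mu_1$, $P_\alpha(\mu_1,\mu_2)=\mu_2$, and $\Pi_\alpha:=P_\alpha P_0^{-1}\Pi_0=\{P_\alpha\pi:\pi\in\mathcal{M}(\mathcal{A}),\ P_0\pi\in\Pi_0\}\subseteq\mathcal{M}(\mathcal{A}_\alpha)$. $B^n_\delta:=\prod_{i=1}^nB_\delta(x_i)$; the data distribution under $\mu$ is $\mu^n$. For $\pi\in\mathcal{M}(\mathcal{A}_\alpha)$ with $\mathbb{E}_{\mu\sim\pi}[\mu^n(B^n_\delta)]>0$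 the posterior value is $\mathbb{E}_{\mu\sim\pi}[\Phi_0(\mu)\mu^n(B^n_\delta)]/\mathbb{E}_{\mu\sim\pi}[\mu^n(B^n_\delta)]$; $\mathcal{U}(\Pi_\alpha|B^n_\delta)$ (resp. $\mathcal{L}$) is its supremum (resp. infimum) over such $\pi\in\Pi_\alpha$ ($\sup\varnothing=-\infty$, $\inf\varnothing=+\infty$). $\Pi_0^\infty(\Phi_0):=\sup_{\pi\in\Pi_0}\inf\{r\in\mathbb{R}:\pi[\Phi_0>r]=0\}$. *)

theory Defs
  imports "HOL-Probability.Probability"
begin

definition enlarge :: "'a::metric_space set \<Rightarrow> real \<Rightarrow> 'a set" where
  "enlarge A e = (\<Union>x'\<in>A. ball x' e)"

definition prokhorov :: "'a::metric_space measure \<Rightarrow> 'a measure \<Rightarrow> real" where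
  "prokhorov \<mu>1 \<mu>2 = Inf {e. e > 0 \<and>
      (\<forall>A\<in>sets (borel :: 'a measure). measure \<mu>1 A \<le> measure \<mu>2 (enlarge A e) + e)}"

definition P_infty :: "('b \<Rightarrow> 'a::metric_space measure) \<Rightarrow> real \<Rightarrow> real" where
  "P_infty P \<delta> = Sup {measure (P \<theta>) (ball x \<delta>) | x \<theta>. True}"

definition positive_model :: "('b \<Rightarrow> 'a::metric_space measure) \<Rightarrow> bool" where
  "positive_model P \<longleftrightarrow> (\<forall>\<theta> x \<delta>. \<delta> > 0 \<longrightarrow> measure (P \<theta>) (ball x \<delta>) > 0)"

definition semibounded :: "('a::topological_space measure \<Rightarrow> real) \<Rightarrow> bool" where
  "semibounded \<Phi> \<longleftrightarrow>
     (\<exists>c. \<forall>\<mu>\<in>space (prob_algebra (borel :: 'a measure)). \<Phi> \<mu> \<le> c) \<or>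
     (\<exists>c. \<forall>\<mu>\<in>space (prob_algebra (borel :: 'a measure)). c \<le> \<Phi> \<mu>)"

definition pushforwards ::
  "('b::topological_space \<Rightarrow> 'a::topological_space measure) \<Rightarrow> 'b measure set \<Rightarrow> 'a measure measure set" where
  "pushforwards P PiT = (\<lambda>\<pi>. distr \<pi> (prob_algebra borel) P) ` PiT"

definition pair_set ::
  "('b \<Rightarrow> 'a::metric_space measure) \<Rightarrow> real \<Rightarrow> ('a measure \<times> 'a measure) set" where
  "pair_set P \<alpha> = {(\<mu>1, \<mu>2). \<mu>1 \<in> range P \<and> \<mu>2 \<in> space (prob_algebra (borel :: 'a measure))
                        \<and> prokhorov \<mu>1 \<mu>2 < \<alpha>}"

text \<open>Pi_alpha = P_alpha P_0^{-1} Pi_0; elements of M(A) are probability measures on the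
  subspace A of M(X) x M(X).\<close>
definition Pi_alpha ::
  "('b::topological_space \<Rightarrow> 'a::metric_space measure) \<Rightarrow> 'b measure set \<Rightarrow> real \<Rightarrow> 'a measure measure set" where
  "Pi_alpha P PiT \<alpha> =
     {distr \<pi> (prob_algebra borel) snd | \<pi>.
        \<pi> \<in> space (prob_algebra (restrict_space (prob_algebra borel \<Otimes>\<^sub>M prob_algebra borel) (pair_set P \<alpha>)))
        \<and> distr \<pi> (prob_algebra borel) fst \<in> pushforwards P PiT}"

definition data_lik :: "nat \<Rightarrow> (nat \<Rightarrow> 'a::metric_space) \<Rightarrow> real \<Rightarrow> 'a measure \<Rightarrow> real" where
  "data_lik n x \<delta> \<mu> = measure (PiM {..<n} (\<lambda>_. \<mu>)) (PiE {..<n} (\<lambda>i. ball (x i) \<delta>))"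

definition ext_integral :: "'c measure \<Rightarrow> ('c \<Rightarrow> real) \<Rightarrow> ereal" where
  "ext_integral M f = enn2ereal (\<integral>\<^sup>+ t. ennreal (f t) \<partial>M) - enn2ereal (\<integral>\<^sup>+ t. ennreal (- f t) \<partial>M)"

definition post_value ::
  "('a::metric_space measure \<Rightarrow> real) \<Rightarrow> nat \<Rightarrow> (nat \<Rightarrow> 'a) \<Rightarrow> real \<Rightarrow> 'a measure measure \<Rightarrow> ereal" where
  "post_value \<Phi> n x \<delta> \<pi> =
     ext_integral \<pi> (\<lambda>\<mu>. \<Phi> \<mu> * data_lik n x \<delta> \<mu>) / ereal (\<integral>\<mu>. data_lik n x \<delta> \<mu> \<partial>\<pi>)"

definition upper_post ::
  "('a::metric_space measure \<Rightarrow> real) \<Rightarrow> 'a measure measure set \<Rightarrow> nat \<Rightarrow> (nat \<Rightarrow> 'a) \<Rightarrow> real \<Rightarrow> ereal" where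
  "upper_post \<Phi> Pis n x \<delta> =
     Sup {post_value \<Phi> n x \<delta> \<pi> | \<pi>. \<pi> \<in> Pis \<and> (\<integral>\<mu>. data_lik n x \<delta> \<mu> \<partial>\<pi>) > 0}"

definition lower_post ::
  "('a::metric_space measure \<Rightarrow> real) \<Rightarrow> 'a measure measure set \<Rightarrow> nat \<Rightarrow> (nat \<Rightarrow> 'a) \<Rightarrow> real \<Rightarrow> ereal" where
  "lower_post \<Phi> Pis n x \<delta> =
     Inf {post_value \<Phi> n x \<delta> \<pi> | \<pi>. \<pi> \<in> Pis \<and> (\<integral>\<mu>. data_lik n x \<delta> \<mu> \<partial>\<pi>) > 0}"

definition ess_sup_val :: "'c measure \<Rightarrow> ('c \<Rightarrow> real) \<Rightarrow> ereal" where
  "ess_sup_val \<pi> \<Phi> = Inf (ereal ` {r. emeasure \<pi> {t \<in> space \<pi>. \<Phi> t > r} = 0})"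

definition ess_inf_val :: "'c measure \<Rightarrow> ('c \<Rightarrow> real) \<Rightarrow> ereal" where
  "ess_inf_val \<pi> \<Phi> = Sup (ereal ` {r. emeasure \<pi> {t \<in> space \<pi>. \<Phi> t < r} = 0})"

definition Pi_infty_sup :: "'c measure set \<Rightarrow> ('c \<Rightarrow> real) \<Rightarrow> ereal" where
  "Pi_infty_sup Pis \<Phi> = Sup ((\<lambda>\<pi>. ess_sup_val \<pi> \<Phi>) ` Pis)"

definition Pi_infty_inf :: "'c measure set \<Rightarrow> ('c \<Rightarrow> real) \<Rightarrow> ereal" where
  "Pi_infty_inf Pis \<Phi> = Inf ((\<lambda>\<pi>. ess_inf_val \<pi> \<Phi>) ` Pis)"

end

theory Submission
  imports Defs
begin

lemma data_lik_eq:
  fixes \<nu> :: "'a::metric_space measure"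
  assumes "prob_space \<nu>" "sets \<nu> = sets borel"
  shows "data_lik n x \<delta> \<nu> = (\<Prod>i<n. measure \<nu> (ball (x i) \<delta>))"
proof -
  interpret product_sigma_finite "\<lambda>_::nat. \<nu>"
    unfolding product_sigma_finite_def using assms prob_space_imp_sigma_finite by blast
  have "emeasure (PiM {..<n} (\<lambda>_. \<nu>)) (PiE {..<n} (\<lambda>i. ball (x i) \<delta>)) = (\<Prod>i<n. emeasure \<nu> (ball (x i) \<delta>))"
    by (rule emeasure_PiM) (auto simp: assms)
  also have "\<dots> = (\<Prod>i<n. ennreal (measure \<nu> (ball (x i) \<delta>)))"
    using assms by (simp add: finite_measure.emeasure_eq_measure prob_space_def)
  also have "\<dots> = ennreal (\<Prod>i<n. measure \<nu> (ball (x i) \<delta>))"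
    by (simp add: prod_ennreal)
  finally show ?thesis unfolding data_lik_def measure_def
    by (simp add: prod_nonneg)
qed

lemma data_lik_meas:
  "data_lik n x \<delta> \<in> borel_measurable (prob_algebra (borel :: 'a::metric_space measure))"
proof -
  have "(\<lambda>\<nu>. \<Prod>i<n. measure \<nu> (ball (x i) \<delta>)) \<in> borel_measurable (prob_algebra (borel :: 'a measure))"
    by measurable
  then show ?thesis
    by (rule measurable_cong[THEN iffD1, rotated])
       (auto simp: space_prob_algebra data_lik_eq)
qed

lemma data_lik_nonneg: "data_lik n x \<delta> \<nu> \<ge> 0"
  unfolding data_lik_def by simp

lemma data_lik_le1:
  assumes "prob_space \<nu>" "sets \<nu> = sets borel"
  shows "data_lik n x \<delta> \<nu> \<le> 1"
  using assms by (simp add: data_lik_eq prod_le_1 prob_space.prob_le_1)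

lemma ext_ge:
  assumes H: "integrable M H" "\<And>t. t \<in> space M \<Longrightarrow> H t \<ge> 0"
    and G: "G \<in> borel_measurable M" "\<And>t. t \<in> space M \<Longrightarrow> G t \<ge> r * H t"
  shows "ext_integral M G \<ge> ereal (r * integral\<^sup>L M H)"
proof (cases "r \<ge> 0")
  case True
  have "(\<integral>\<^sup>+ t. ennreal (- G t) \<partial>M) = 0"
  proof (intro nn_integral_0_iff_AE[THEN iffD2] AE_I2)
    fix t assume t: "t \<in> space M"
    have "0 \<le> r * H t" using True H(2)[OF t] by simp
    then have "- G t \<le> 0" using G(2)[OF t] by simp
    then show "ennreal (- G t) = 0" by (simp add: ennreal_eq_0_iff)
  qed (rule measurable_compose[OF borel_measurable_uminus[OF G(1)] measurable_ennreal])
  moreover have "(\<integral>\<^sup>+ t. ennreal (r * H t) \<partial>M) \<le> (\<integral>\<^sup>+ t. ennreal (G t) \<partial>M)"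
    using G by (intro nn_integral_mono) (auto intro: ennreal_leI)
  moreover have "(\<integral>\<^sup>+ t. ennreal (r * H t) \<partial>M) = ennreal (integral\<^sup>L M (\<lambda>t. r * H t))"
    using H True by (intro nn_integral_eq_integral) auto
  ultimately have A: "ennreal (r * integral\<^sup>L M H) \<le> (\<integral>\<^sup>+ t. ennreal (G t) \<partial>M)"
    and B: "(\<integral>\<^sup>+ t. ennreal (- G t) \<partial>M) = 0" by simp_all
  have I0: "integral\<^sup>L M H \<ge> 0" using H by (simp add: integral_nonneg)
  have "ereal (r * integral\<^sup>L M H) = enn2ereal (ennreal (r * integral\<^sup>L M H))"
    using True I0 by simp
  also have "\<dots> \<le> enn2ereal (\<integral>\<^sup>+ t. ennreal (G t) \<partial>M)"
    using A by (simp add: less_eq_ennreal.rep_eq)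
  finally show ?thesis unfolding ext_integral_def B by (simp add: zero_ennreal.rep_eq)
next
  case False
  have "(\<integral>\<^sup>+ t. ennreal (- G t) \<partial>M) \<le> (\<integral>\<^sup>+ t. ennreal (- r * H t) \<partial>M)"
    using G by (intro nn_integral_mono) (auto intro: ennreal_leI)
  moreover have "(\<integral>\<^sup>+ t. ennreal (- r * H t) \<partial>M) = ennreal (integral\<^sup>L M (\<lambda>t. - r * H t))"
    using H False by (intro nn_integral_eq_integral) (auto intro!: AE_I2 mult_nonpos_nonneg)
  ultimately have B0: "(\<integral>\<^sup>+ t. ennreal (- G t) \<partial>M) \<le> ennreal (- r * integral\<^sup>L M H)"
    by simp
  have I0: "integral\<^sup>L M H \<ge> 0" using H by (simp add: integral_nonneg)
  have B: "enn2ereal (\<integral>\<^sup>+ t. ennreal (- G t) \<partial>M) \<le> ereal (- r * integral\<^sup>L M H)"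
  proof -
    have "enn2ereal (\<integral>\<^sup>+ t. ennreal (- G t) \<partial>M) \<le> enn2ereal (ennreal (- r * integral\<^sup>L M H))"
      using B0 by (simp add: less_eq_ennreal.rep_eq)
    also have "\<dots> = ereal (- r * integral\<^sup>L M H)" using False I0 enn2ereal_ennreal[of "- r * integral\<^sup>L M H"] by (simp add: mult_nonpos_nonneg)
    finally show ?thesis .
  qed
  have "ereal (r * integral\<^sup>L M H) = 0 - ereal (- r * integral\<^sup>L M H)" by simp
  also have "\<dots> \<le> ext_integral M G" unfolding ext_integral_def
    by (rule ereal_minus_mono[OF _ B]) simp
  finally show ?thesis .
qed

lemma ext_le:
  assumes H: "integrable M H" "\<And>t. t \<in> space M \<Longrightarrow> H t \<ge> 0"
    and G: "G \<in> borel_measurable M" "\<And>t. t \<in> space M \<Longrightarrow> G t \<le> r * H t"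
  shows "ext_integral M G \<le> ereal (r * integral\<^sup>L M H)"
proof (cases "r \<le> 0")
  case True
  have A: "(\<integral>\<^sup>+ t. ennreal (G t) \<partial>M) = 0"
  proof (intro nn_integral_0_iff_AE[THEN iffD2] AE_I2)
    fix t assume t: "t \<in> space M"
    have "r * H t \<le> 0" using True H(2)[OF t] by (simp add: mult_nonpos_nonneg)
    then have "G t \<le> 0" using G(2)[OF t] by simp
    then show "ennreal (G t) = 0" by (simp add: ennreal_eq_0_iff)
  qed (rule measurable_compose[OF G(1) measurable_ennreal])
  have "(\<integral>\<^sup>+ t. ennreal (- r * H t) \<partial>M) \<le> (\<integral>\<^sup>+ t. ennreal (- G t) \<partial>M)"
    using G by (intro nn_integral_mono) (auto intro: ennreal_leI)
  moreover have "(\<integral>\<^sup>+ t. ennreal (- r * H t) \<partial>M) = ennreal (integral\<^sup>L M (\<lambda>t. - r * H t))"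
    using H True by (intro nn_integral_eq_integral) (auto intro!: AE_I2 mult_nonpos_nonneg)
  ultimately have B0: "ennreal (- r * integral\<^sup>L M H) \<le> (\<integral>\<^sup>+ t. ennreal (- G t) \<partial>M)"
    by simp
  have I0: "integral\<^sup>L M H \<ge> 0" using H by (simp add: integral_nonneg)
  have B: "ereal (- r * integral\<^sup>L M H) \<le> enn2ereal (\<integral>\<^sup>+ t. ennreal (- G t) \<partial>M)"
  proof -
    have "ereal (- r * integral\<^sup>L M H) = enn2ereal (ennreal (- r * integral\<^sup>L M H))"
      using True I0 enn2ereal_ennreal[of "- r * integral\<^sup>L M H"] by (simp add: mult_nonpos_nonneg)
    also have "\<dots> \<le> enn2ereal (\<integral>\<^sup>+ t. ennreal (- G t) \<partial>M)"
      using B0 by (simp add: less_eq_ennreal.rep_eq)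
    finally show ?thesis .
  qed
  have "ext_integral M G \<le> 0 - ereal (- r * integral\<^sup>L M H)" unfolding ext_integral_def A
    by (rule ereal_minus_mono[OF _ B]) (simp add: zero_ennreal.rep_eq)
  also have "\<dots> = ereal (r * integral\<^sup>L M H)" by simp
  finally show ?thesis .
next
  case False
  have B: "(\<integral>\<^sup>+ t. ennreal (- G t) \<partial>M) \<ge> 0" by simp
  have "(\<integral>\<^sup>+ t. ennreal (G t) \<partial>M) \<le> (\<integral>\<^sup>+ t. ennreal (r * H t) \<partial>M)"
    using G by (intro nn_integral_mono) (auto intro: ennreal_leI)
  moreover have "(\<integral>\<^sup>+ t. ennreal (r * H t) \<partial>M) = ennreal (integral\<^sup>L M (\<lambda>t. r * H t))"
    using H False by (intro nn_integral_eq_integral) auto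
  ultimately have A0: "(\<integral>\<^sup>+ t. ennreal (G t) \<partial>M) \<le> ennreal (r * integral\<^sup>L M H)" by simp
  have I0: "integral\<^sup>L M H \<ge> 0" using H by (simp add: integral_nonneg)
  have A: "enn2ereal (\<integral>\<^sup>+ t. ennreal (G t) \<partial>M) \<le> ereal (r * integral\<^sup>L M H)"
  proof -
    have "enn2ereal (\<integral>\<^sup>+ t. ennreal (G t) \<partial>M) \<le> enn2ereal (ennreal (r * integral\<^sup>L M H))"
      using A0 by (simp add: less_eq_ennreal.rep_eq)
    also have "\<dots> = ereal (r * integral\<^sup>L M H)" using False I0 by simp
    finally show ?thesis .
  qed
  have "ext_integral M G \<le> ereal (r * integral\<^sup>L M H) - 0" unfolding ext_integral_def
    by (rule ereal_minus_mono[OF A]) (simp add: zero_ennreal.rep_eq)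
  then show ?thesis by simp
qed

lemma enlarge_sub: "e > 0 \<Longrightarrow> A \<subseteq> enlarge A e"
  unfolding enlarge_def by auto

lemma enlarge_open: "open (enlarge A e)"
  unfolding enlarge_def by auto

lemma prok_le:
  fixes \<mu> \<nu> :: "'a::metric_space measure"
  assumes e: "0 < e" "c \<le> e" and \<nu>: "finite_measure \<nu>" "sets \<nu> = sets borel"
    and ineq: "\<And>A. A \<in> sets borel \<Longrightarrow> measure \<mu> A \<le> measure \<nu> A + c"
  shows "prokhorov \<mu> \<nu> \<le> e"
  unfolding prokhorov_def
proof (rule cInf_lower)
  show "bdd_below {e. e > 0 \<and> (\<forall>A\<in>sets (borel :: 'a measure). measure \<mu> A \<le> measure \<nu> (enlarge A e) + e)}"
    by (rule bdd_belowI[of _ 0]) auto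
  have "measure \<mu> A \<le> measure \<nu> (enlarge A e) + e" if A: "A \<in> sets borel" for A
  proof -
    have "measure \<nu> A \<le> measure \<nu> (enlarge A e)"
      using \<nu> A e enlarge_sub[of e A] enlarge_open[of A e]
      by (intro finite_measure.finite_measure_mono) auto
    then show ?thesis using ineq[OF A] e by linarith
  qed
  then show "e \<in> {e. e > 0 \<and> (\<forall>A\<in>sets (borel :: 'a measure). measure \<mu> A \<le> measure \<nu> (enlarge A e) + e)}"
    using e by auto
qed

lemma P_props:
  assumes Pm: "P \<in> borel \<rightarrow>\<^sub>M prob_algebra (borel :: 'a::metric_space measure)"
  shows "prob_space (P \<theta>)" "sets (P \<theta>) = sets borel" "space (P \<theta>) = UNIV"
proof -
  have "P \<theta> \<in> space (prob_algebra borel)" using measurable_space[OF Pm] by simp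
  then show "prob_space (P \<theta>)" "sets (P \<theta>) = sets borel" by (auto simp: space_prob_algebra)
  then show "space (P \<theta>) = UNIV" using sets_eq_imp_space_eq by fastforce
qed

lemma le_P_infty:
  assumes Pm: "P \<in> borel \<rightarrow>\<^sub>M prob_algebra (borel :: 'a::metric_space measure)"
  shows "measure (P \<theta>) (ball y \<delta>) \<le> P_infty P \<delta>"
  unfolding P_infty_def
proof (rule cSup_upper)
  show "bdd_above {measure (P \<theta>) (ball x \<delta>) |x \<theta>. True}"
    using P_props(1)[OF Pm] by (intro bdd_aboveI[of _ 1]) (auto simp: prob_space.prob_le_1)
qed auto

lemma data_lik_pos:
  assumes Pm: "P \<in> borel \<rightarrow>\<^sub>M prob_algebra (borel :: 'a::metric_space measure)"
    and pos: "positive_model P" and \<delta>: "\<delta> > 0"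
  shows "data_lik n x \<delta> (P \<theta>) > 0"
  using pos \<delta> by (simp add: data_lik_eq[OF P_props(1,2)[OF Pm]] positive_model_def prod_pos)

lemma core:
  fixes P :: "'b::topological_space \<Rightarrow> 'a::metric_space measure"
  assumes Pm: "P \<in> borel \<rightarrow>\<^sub>M prob_algebra borel" and pos: "positive_model P"
    and \<delta>: "\<delta> > 0" and \<alpha>: "0 < \<alpha>" "\<alpha> < 1" and Pinf: "P_infty P \<delta> < \<alpha>" and n: "n \<ge> 1"
    and S: "S \<in> sets (prob_algebra borel)"
    and \<pi>T: "\<pi>T \<in> PiT" "PiT \<subseteq> space (prob_algebra borel)"
  shows "\<exists>F. F \<in> borel \<rightarrow>\<^sub>M prob_algebra borel \<and> distr \<pi>T (prob_algebra borel) F \<in> Pi_alpha P PiT \<alpha>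
     \<and> (\<forall>\<theta>. P \<theta> \<in> S \<longrightarrow> F \<theta> = P \<theta>) \<and> (\<forall>\<theta>. P \<theta> \<notin> S \<longrightarrow> data_lik n x \<delta> (F \<theta>) = 0)"
proof -
  note Pp = P_props[OF Pm]
  have "ball (x 0) \<delta> \<noteq> UNIV"
  proof
    assume "ball (x 0) \<delta> = UNIV"
    then have "measure (P undefined) (ball (x 0) \<delta>) = 1"
      using prob_space.prob_space[OF Pp(1)] Pp(3) by simp
    then show False using le_P_infty[OF Pm, of undefined "x 0" \<delta>] Pinf \<alpha> by simp
  qed
  then obtain z where z: "z \<notin> ball (x 0) \<delta>" by blast
  define h where "h y = (if y \<in> ball (x 0) \<delta> then z else y)" for y
  have hm: "h \<in> borel \<rightarrow>\<^sub>M borel"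
    unfolding h_def by (intro measurable_If_set) auto
  define F where "F \<theta> = (if \<theta> \<in> P -` S then P \<theta> else distr (P \<theta>) borel h)" for \<theta>
  have Fm: "F \<in> borel \<rightarrow>\<^sub>M prob_algebra borel"
    unfolding F_def
  proof (intro measurable_If_set Pm)
    show "(\<lambda>\<theta>. distr (P \<theta>) borel h) \<in> borel \<rightarrow>\<^sub>M prob_algebra borel"
      using measurable_compose[OF Pm measurable_distr_prob_space[OF hm]] .
    show "P -` S \<inter> space borel \<in> sets borel" using measurable_sets[OF Pm S] by simp
  qed
  have hmP: "h \<in> P \<theta> \<rightarrow>\<^sub>M borel" for \<theta>
    using hm measurable_cong_sets[OF Pp(2) refl] by blast
  have distr_props: "prob_space (distr (P \<theta>) borel h)" "sets (distr (P \<theta>) borel h) = sets borel" for \<theta>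
    using prob_space.prob_space_distr[OF Pp(1) hmP] by auto
  have zero: "data_lik n x \<delta> (F \<theta>) = 0" if "P \<theta> \<notin> S" for \<theta>
  proof -
    have "h -` ball (x 0) \<delta> = {}" using z by (auto simp: h_def split: if_splits)
    then have "measure (distr (P \<theta>) borel h) (ball (x 0) \<delta>) = 0"
      by (simp add: measure_distr[OF hmP])
    moreover have "0 \<in> {..<n}" using n by simp
    ultimately show ?thesis using that
      by (auto simp: F_def data_lik_eq[OF distr_props] intro!: prod_zero)
  qed
  have prok: "prokhorov (P \<theta>) (F \<theta>) < \<alpha>" for \<theta>
  proof (cases "P \<theta> \<in> S")
    case True
    have "prokhorov (P \<theta>) (P \<theta>) \<le> \<alpha> / 2"
      using \<alpha> Pp(1,2) by (intro prok_le[where c=0]) (auto simp: prob_space_def)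
    then show ?thesis using True \<alpha> by (simp add: F_def)
  next
    case False
    let ?c = "measure (P \<theta>) (ball (x 0) \<delta>)"
    have c: "?c \<le> P_infty P \<delta>" by (rule le_P_infty[OF Pm])
    have "prokhorov (P \<theta>) (distr (P \<theta>) borel h) \<le> (P_infty P \<delta> + \<alpha>) / 2"
    proof (rule prok_le[where c="?c"])
      show "0 < (P_infty P \<delta> + \<alpha>) / 2"
      using order_trans[OF measure_nonneg c] \<alpha> by (intro divide_pos_pos add_nonneg_pos) auto
      show "?c \<le> (P_infty P \<delta> + \<alpha>) / 2" using c Pinf by (simp add: field_simps)
      show "finite_measure (distr (P \<theta>) borel h)" using distr_props by (simp add: prob_space_def)
      show "sets (distr (P \<theta>) borel h) = sets borel" by simp
      fix A :: "'a set" assume A: "A \<in> sets borel"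
      have "measure (P \<theta>) A \<le> measure (P \<theta>) ((h -` A \<inter> space (P \<theta>)) \<union> ball (x 0) \<delta>)"
        using A Pp measurable_sets[OF hm A] by (intro finite_measure.finite_measure_mono) (auto simp: prob_space_def h_def)
      also have "\<dots> \<le> measure (P \<theta>) (h -` A \<inter> space (P \<theta>)) + ?c"
        using A Pp measurable_sets[OF hmP A] by (intro measure_Un_le) auto
      finally show "measure (P \<theta>) A \<le> measure (distr (P \<theta>) borel h) A + ?c"
        by (simp add: measure_distr[OF hmP A])
    qed
    then show ?thesis using False Pinf by (simp add: F_def)
  qed
  define R where "R = restrict_space (prob_algebra borel \<Otimes>\<^sub>M prob_algebra (borel :: 'a measure)) (pair_set P \<alpha>)"
  have \<pi>Tp: "prob_space \<pi>T" "sets \<pi>T = sets borel" using \<pi>T by (auto simp: space_prob_algebra)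
  have pm: "(\<lambda>\<theta>. (P \<theta>, F \<theta>)) \<in> \<pi>T \<rightarrow>\<^sub>M R"
    unfolding R_def measurable_cong_sets[OF \<pi>Tp(2) refl]
  proof (rule measurable_restrict_space2)
    show "(\<lambda>\<theta>. (P \<theta>, F \<theta>)) \<in> space borel \<rightarrow> pair_set P \<alpha>"
      using prok measurable_space[OF Fm] by (auto simp: pair_set_def)
    show "(\<lambda>\<theta>. (P \<theta>, F \<theta>)) \<in> borel \<rightarrow>\<^sub>M prob_algebra borel \<Otimes>\<^sub>M prob_algebra borel"
      using Pm Fm by (intro measurable_Pair)
  qed
  define \<pi>p where "\<pi>p = distr \<pi>T R (\<lambda>\<theta>. (P \<theta>, F \<theta>))"
  have \<pi>p_sp: "\<pi>p \<in> space (prob_algebra R)"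
    unfolding \<pi>p_def space_prob_algebra using prob_space.prob_space_distr[OF \<pi>Tp(1) pm] by simp
  have fstm: "fst \<in> R \<rightarrow>\<^sub>M prob_algebra borel" unfolding R_def
    by (intro measurable_restrict_space1 measurable_fst)
  have sndm: "snd \<in> R \<rightarrow>\<^sub>M prob_algebra borel" unfolding R_def
    by (intro measurable_restrict_space1 measurable_snd)
  have fstd: "distr \<pi>p (prob_algebra borel) fst = distr \<pi>T (prob_algebra borel) P"
    unfolding \<pi>p_def by (simp add: distr_distr[OF fstm pm] comp_def)
  have sndd: "distr \<pi>p (prob_algebra borel) snd = distr \<pi>T (prob_algebra borel) F"
    unfolding \<pi>p_def by (simp add: distr_distr[OF sndm pm] comp_def)
  have "distr \<pi>T (prob_algebra borel) F \<in> Pi_alpha P PiT \<alpha>"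
    unfolding Pi_alpha_def pushforwards_def mem_Collect_eq
  proof (intro exI conjI)
    show "distr \<pi>T (prob_algebra borel) F = distr \<pi>p (prob_algebra borel) snd" using sndd by simp
    show "\<pi>p \<in> space (prob_algebra (restrict_space (prob_algebra borel \<Otimes>\<^sub>M prob_algebra borel) (pair_set P \<alpha>)))"
      using \<pi>p_sp unfolding R_def .
    show "distr \<pi>p (prob_algebra borel) fst \<in> (\<lambda>\<pi>. distr \<pi> (prob_algebra borel) P) ` PiT"
      using fstd \<pi>T(1) by simp
  qed
  then show ?thesis using Fm zero by (auto simp: F_def)
qed

lemma post_setup:
  fixes P :: "'b::topological_space \<Rightarrow> 'a::metric_space measure"
  assumes Pm: "P \<in> borel \<rightarrow>\<^sub>M prob_algebra borel" and pos: "positive_model P" and \<delta>: "\<delta> > 0"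
    and \<pi>T: "\<pi>T \<in> space (prob_algebra borel)"
    and Fm: "F \<in> borel \<rightarrow>\<^sub>M prob_algebra borel"
    and Phim: "Phi \<in> borel_measurable (prob_algebra borel)"
    and FS: "\<forall>\<theta>. P \<theta> \<in> S \<longrightarrow> F \<theta> = P \<theta>"
    and FN: "\<forall>\<theta>. P \<theta> \<notin> S \<longrightarrow> data_lik n x \<delta> (F \<theta>) = 0"
    and Sm: "S \<in> sets (prob_algebra borel)"
    and pm: "emeasure \<pi>T {\<theta> \<in> space \<pi>T. P \<theta> \<in> S} \<noteq> 0"
  shows "integrable \<pi>T (\<lambda>\<theta>. data_lik n x \<delta> (F \<theta>))"
    and "(\<integral>\<mu>. data_lik n x \<delta> \<mu> \<partial>distr \<pi>T (prob_algebra borel) F) = (\<integral>\<theta>. data_lik n x \<delta> (F \<theta>) \<partial>\<pi>T)"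
    and "(\<integral>\<theta>. data_lik n x \<delta> (F \<theta>) \<partial>\<pi>T) > 0"
    and "post_value Phi n x \<delta> (distr \<pi>T (prob_algebra borel) F) =
         ext_integral \<pi>T (\<lambda>\<theta>. Phi (F \<theta>) * data_lik n x \<delta> (F \<theta>)) / ereal (\<integral>\<theta>. data_lik n x \<delta> (F \<theta>) \<partial>\<pi>T)"
    and "(\<lambda>\<theta>. Phi (F \<theta>) * data_lik n x \<delta> (F \<theta>)) \<in> borel_measurable \<pi>T"
proof -
  have \<pi>Tp: "prob_space \<pi>T" "sets \<pi>T = sets borel" using \<pi>T by (auto simp: space_prob_algebra)
  have FmT: "F \<in> \<pi>T \<rightarrow>\<^sub>M prob_algebra borel" using Fm measurable_cong_sets[OF \<pi>Tp(2) refl] by blast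
  have PmT: "P \<in> \<pi>T \<rightarrow>\<^sub>M prob_algebra borel" using Pm measurable_cong_sets[OF \<pi>Tp(2) refl] by blast
  have Lm: "(\<lambda>\<theta>. data_lik n x \<delta> (F \<theta>)) \<in> borel_measurable \<pi>T"
    using measurable_compose[OF FmT data_lik_meas] .
  have Fsp: "prob_space (F \<theta>)" "sets (F \<theta>) = sets borel" for \<theta>
    using measurable_space[OF Fm, of \<theta>] by (auto simp: space_prob_algebra)
  show int: "integrable \<pi>T (\<lambda>\<theta>. data_lik n x \<delta> (F \<theta>))"
  proof (rule finite_measure.integrable_const_bound[where B=1])
    show "finite_measure \<pi>T" using \<pi>Tp by (simp add: prob_space_def)
    show "AE \<theta> in \<pi>T. norm (data_lik n x \<delta> (F \<theta>)) \<le> 1"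
    proof (intro AE_I2)
      fix \<theta>
      have "0 \<le> data_lik n x \<delta> (F \<theta>)" "data_lik n x \<delta> (F \<theta>) \<le> 1"
        using data_lik_le1[OF Fsp] data_lik_nonneg by auto
      then show "norm (data_lik n x \<delta> (F \<theta>)) \<le> 1" by simp
    qed
  qed (rule Lm)
  show "(\<integral>\<mu>. data_lik n x \<delta> \<mu> \<partial>distr \<pi>T (prob_algebra borel) F) = (\<integral>\<theta>. data_lik n x \<delta> (F \<theta>) \<partial>\<pi>T)"
    by (rule integral_distr[OF FmT data_lik_meas])
  show Gm: "(\<lambda>\<theta>. Phi (F \<theta>) * data_lik n x \<delta> (F \<theta>)) \<in> borel_measurable \<pi>T"
    using measurable_compose[OF FmT Phim] Lm by (rule borel_measurable_times)
  have GM: "(\<lambda>\<mu>. Phi \<mu> * data_lik n x \<delta> \<mu>) \<in> borel_measurable (prob_algebra borel)"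
    using Phim data_lik_meas by (rule borel_measurable_times)
  have e1: "(\<integral>\<^sup>+ \<mu>. ennreal (Phi \<mu> * data_lik n x \<delta> \<mu>) \<partial>distr \<pi>T (prob_algebra borel) F)
      = (\<integral>\<^sup>+ \<theta>. ennreal (Phi (F \<theta>) * data_lik n x \<delta> (F \<theta>)) \<partial>\<pi>T)"
    by (rule nn_integral_distr[OF FmT], subst measurable_distr_eq1, rule measurable_compose[OF GM measurable_ennreal])
  have e2: "(\<integral>\<^sup>+ \<mu>. ennreal (- (Phi \<mu> * data_lik n x \<delta> \<mu>)) \<partial>distr \<pi>T (prob_algebra borel) F)
      = (\<integral>\<^sup>+ \<theta>. ennreal (- (Phi (F \<theta>) * data_lik n x \<delta> (F \<theta>))) \<partial>\<pi>T)"
    by (rule nn_integral_distr[OF FmT], subst measurable_distr_eq1, rule measurable_compose[OF borel_measurable_uminus[OF GM] measurable_ennreal])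
  show "post_value Phi n x \<delta> (distr \<pi>T (prob_algebra borel) F) =
         ext_integral \<pi>T (\<lambda>\<theta>. Phi (F \<theta>) * data_lik n x \<delta> (F \<theta>)) / ereal (\<integral>\<theta>. data_lik n x \<delta> (F \<theta>) \<partial>\<pi>T)"
    unfolding post_value_def ext_integral_def e1 e2 integral_distr[OF FmT data_lik_meas] ..
  have nn: "AE \<theta> in \<pi>T. 0 \<le> data_lik n x \<delta> (F \<theta>)" by (intro AE_I2) (rule data_lik_nonneg)
  have "integral\<^sup>L \<pi>T (\<lambda>\<theta>. data_lik n x \<delta> (F \<theta>)) \<noteq> 0"
  proof
    assume "integral\<^sup>L \<pi>T (\<lambda>\<theta>. data_lik n x \<delta> (F \<theta>)) = 0"
    then have AE0: "AE \<theta> in \<pi>T. data_lik n x \<delta> (F \<theta>) = 0"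
      by (rule iffD1[OF integral_nonneg_eq_0_iff_AE[OF int nn]])
    have "data_lik n x \<delta> (F \<theta>) \<noteq> 0 \<longleftrightarrow> P \<theta> \<in> S" for \<theta>
    proof (cases "P \<theta> \<in> S")
      case True
      then show ?thesis using FS data_lik_pos[OF Pm pos \<delta>, of n x \<theta>] by simp
    next
      case False
      then show ?thesis using FN by simp
    qed
    then have eqs: "{\<theta> \<in> space \<pi>T. \<not> data_lik n x \<delta> (F \<theta>) = 0} = {\<theta> \<in> space \<pi>T. P \<theta> \<in> S}"
      by blast
    have "{\<theta> \<in> space \<pi>T. P \<theta> \<in> S} = P -` S \<inter> space \<pi>T" by blast
    then have sm: "{\<theta> \<in> space \<pi>T. P \<theta> \<in> S} \<in> sets \<pi>T"
      using measurable_sets[OF PmT Sm] by simp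
    have "emeasure \<pi>T {\<theta> \<in> space \<pi>T. P \<theta> \<in> S} = 0"
      using AE_iff_measurable[OF sm eqs] AE0 by simp
    then show False using pm by simp
  qed
  moreover have "integral\<^sup>L \<pi>T (\<lambda>\<theta>. data_lik n x \<delta> (F \<theta>)) \<ge> 0"
    using integral_nonneg_AE[OF nn] by simp
  ultimately show "(\<integral>\<theta>. data_lik n x \<delta> (F \<theta>) \<partial>\<pi>T) > 0" by simp
qed


theorem theorem6p9:
  fixes P :: "'b::polish_space \<Rightarrow> 'a::polish_space measure"
    and PiT :: "'b measure set"
    and Phi :: "'a measure \<Rightarrow> real"
    and \<delta> \<alpha> :: real
    and n :: nat
    and x :: "nat \<Rightarrow> 'a"
  assumes "P \<in> borel \<rightarrow>\<^sub>M prob_algebra borel"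
    and "positive_model P"
    and "PiT \<subseteq> space (prob_algebra borel)"
    and "Phi \<in> borel_measurable (prob_algebra borel)"
    and "semibounded Phi"
    and "\<delta> > 0" and "0 < \<alpha>" and "\<alpha> < 1"
    and "P_infty P \<delta> < \<alpha>"
    and "n \<ge> 1"
  shows "upper_post Phi (Pi_alpha P PiT \<alpha>) n x \<delta> \<ge> Pi_infty_sup (pushforwards P PiT) Phi
         \<and> lower_post Phi (Pi_alpha P PiT \<alpha>) n x \<delta> \<le> Pi_infty_inf (pushforwards P PiT) Phi"
proof
  note Pm = assms(1)
  show "Pi_infty_sup (pushforwards P PiT) Phi \<le> upper_post Phi (Pi_alpha P PiT \<alpha>) n x \<delta>"
    unfolding Pi_infty_sup_def
  proof (rule SUP_least)
    fix \<pi>0 assume "\<pi>0 \<in> pushforwards P PiT"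
    then obtain \<pi>T where \<pi>T: "\<pi>T \<in> PiT" and \<pi>0: "\<pi>0 = distr \<pi>T (prob_algebra borel) P"
      by (auto simp: pushforwards_def)
    have \<pi>Ts: "\<pi>T \<in> space (prob_algebra borel)" using assms(3) \<pi>T by auto
    then have \<pi>Tp: "sets \<pi>T = sets borel" by (auto simp: space_prob_algebra)
    have PmT: "P \<in> \<pi>T \<rightarrow>\<^sub>M prob_algebra borel" using Pm measurable_cong_sets[OF \<pi>Tp refl] by blast
    show "ess_sup_val \<pi>0 Phi \<le> upper_post Phi (Pi_alpha P PiT \<alpha>) n x \<delta>"
    proof (rule ccontr)
      assume "\<not> ?thesis"
      then have lt: "upper_post Phi (Pi_alpha P PiT \<alpha>) n x \<delta> < ess_sup_val \<pi>0 Phi" by simp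
      obtain r where r: "upper_post Phi (Pi_alpha P PiT \<alpha>) n x \<delta> < ereal r" "ereal r < ess_sup_val \<pi>0 Phi"
        using ereal_dense2[OF lt] by auto
      define S where "S = {\<mu> \<in> space (prob_algebra borel). r < Phi \<mu>}"
      have Seq: "S = Phi -` {r<..} \<inter> space (prob_algebra borel)" unfolding S_def by auto
      have Sm: "S \<in> sets (prob_algebra borel)"
        unfolding Seq by (rule measurable_sets[OF assms(4)]) auto
      have pm: "emeasure \<pi>T {\<theta> \<in> space \<pi>T. P \<theta> \<in> S} \<noteq> 0"
      proof
        assume 0: "emeasure \<pi>T {\<theta> \<in> space \<pi>T. P \<theta> \<in> S} = 0"
        have "{t \<in> space \<pi>0. r < Phi t} = S" unfolding \<pi>0 S_def by simp
        then have "emeasure \<pi>0 {t \<in> space \<pi>0. r < Phi t} = emeasure \<pi>T (P -` S \<inter> space \<pi>T)"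
          unfolding \<pi>0 by (simp add: emeasure_distr[OF PmT Sm])
        also have "P -` S \<inter> space \<pi>T = {\<theta> \<in> space \<pi>T. P \<theta> \<in> S}" by auto
        finally have "emeasure \<pi>0 {t \<in> space \<pi>0. r < Phi t} = 0" using 0 by simp
        then have "ess_sup_val \<pi>0 Phi \<le> ereal r" unfolding ess_sup_val_def
          by (intro Inf_lower) auto
        then show False using r by simp
      qed
      obtain F where F: "F \<in> borel \<rightarrow>\<^sub>M prob_algebra borel" "distr \<pi>T (prob_algebra borel) F \<in> Pi_alpha P PiT \<alpha>"
        "\<forall>\<theta>. P \<theta> \<in> S \<longrightarrow> F \<theta> = P \<theta>" "\<forall>\<theta>. P \<theta> \<notin> S \<longrightarrow> data_lik n x \<delta> (F \<theta>) = 0"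
        using core[OF Pm assms(2,6,7,8,9,10) Sm \<pi>T assms(3), of x] by blast
      note ps = post_setup[OF Pm assms(2,6) \<pi>Ts F(1) assms(4) F(3,4) Sm pm]
      let ?I = "\<integral>\<theta>. data_lik n x \<delta> (F \<theta>) \<partial>\<pi>T"
      have Pin: "P \<theta> \<in> space (prob_algebra borel)" for \<theta> using measurable_space[OF Pm] by simp
      have ge: "ext_integral \<pi>T (\<lambda>\<theta>. Phi (F \<theta>) * data_lik n x \<delta> (F \<theta>)) \<ge> ereal (r * ?I)"
      proof (rule ext_ge[OF ps(1) data_lik_nonneg ps(5)])
        fix \<theta> show "r * data_lik n x \<delta> (F \<theta>) \<le> Phi (F \<theta>) * data_lik n x \<delta> (F \<theta>)"
        proof (cases "P \<theta> \<in> S")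
          case True
          then have "r < Phi (F \<theta>)" using F(3) by (simp add: S_def)
          then show ?thesis by (intro mult_right_mono data_lik_nonneg) simp
        next
          case False then show ?thesis using F(4) by simp
        qed
      qed
      have "ereal r \<le> post_value Phi n x \<delta> (distr \<pi>T (prob_algebra borel) F)"
        unfolding ps(4) using ps(3) ge by (subst ereal_le_divide_pos) (auto simp: mult.commute)
      also have "\<dots> \<le> upper_post Phi (Pi_alpha P PiT \<alpha>) n x \<delta>"
        unfolding upper_post_def using F(2) ps(2,3) by (intro Sup_upper) auto
      finally show False using r by simp
    qed
  qed
  show "lower_post Phi (Pi_alpha P PiT \<alpha>) n x \<delta> \<le> Pi_infty_inf (pushforwards P PiT) Phi"
    unfolding Pi_infty_inf_def
  proof (rule INF_greatest)
    fix \<pi>0 assume "\<pi>0 \<in> pushforwards P PiT"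
    then obtain \<pi>T where \<pi>T: "\<pi>T \<in> PiT" and \<pi>0: "\<pi>0 = distr \<pi>T (prob_algebra borel) P"
      by (auto simp: pushforwards_def)
    have \<pi>Ts: "\<pi>T \<in> space (prob_algebra borel)" using assms(3) \<pi>T by auto
    then have \<pi>Tp: "sets \<pi>T = sets borel" by (auto simp: space_prob_algebra)
    have PmT: "P \<in> \<pi>T \<rightarrow>\<^sub>M prob_algebra borel" using Pm measurable_cong_sets[OF \<pi>Tp refl] by blast
    show "lower_post Phi (Pi_alpha P PiT \<alpha>) n x \<delta> \<le> ess_inf_val \<pi>0 Phi"
    proof (rule ccontr)
      assume "\<not> ?thesis"
      then have lt: "ess_inf_val \<pi>0 Phi < lower_post Phi (Pi_alpha P PiT \<alpha>) n x \<delta>" by simp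
      obtain r where r: "ereal r < lower_post Phi (Pi_alpha P PiT \<alpha>) n x \<delta>" "ess_inf_val \<pi>0 Phi < ereal r"
        using ereal_dense2[OF lt] by auto
      define S where "S = {\<mu> \<in> space (prob_algebra borel). Phi \<mu> < r}"
      have Seq: "S = Phi -` {..<r} \<inter> space (prob_algebra borel)" unfolding S_def by auto
      have Sm: "S \<in> sets (prob_algebra borel)"
        unfolding Seq by (rule measurable_sets[OF assms(4)]) auto
      have pm: "emeasure \<pi>T {\<theta> \<in> space \<pi>T. P \<theta> \<in> S} \<noteq> 0"
      proof
        assume 0: "emeasure \<pi>T {\<theta> \<in> space \<pi>T. P \<theta> \<in> S} = 0"
        have "{t \<in> space \<pi>0. Phi t < r} = S" unfolding \<pi>0 S_def by simp
        then have "emeasure \<pi>0 {t \<in> space \<pi>0. Phi t < r} = emeasure \<pi>T (P -` S \<inter> space \<pi>T)"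
          unfolding \<pi>0 by (simp add: emeasure_distr[OF PmT Sm])
        also have "P -` S \<inter> space \<pi>T = {\<theta> \<in> space \<pi>T. P \<theta> \<in> S}" by auto
        finally have "emeasure \<pi>0 {t \<in> space \<pi>0. Phi t < r} = 0" using 0 by simp
        then have "ereal r \<le> ess_inf_val \<pi>0 Phi" unfolding ess_inf_val_def
          by (intro Sup_upper) auto
        then show False using r by simp
      qed
      obtain F where F: "F \<in> borel \<rightarrow>\<^sub>M prob_algebra borel" "distr \<pi>T (prob_algebra borel) F \<in> Pi_alpha P PiT \<alpha>"
        "\<forall>\<theta>. P \<theta> \<in> S \<longrightarrow> F \<theta> = P \<theta>" "\<forall>\<theta>. P \<theta> \<notin> S \<longrightarrow> data_lik n x \<delta> (F \<theta>) = 0"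
        using core[OF Pm assms(2,6,7,8,9,10) Sm \<pi>T assms(3), of x] by blast
      note ps = post_setup[OF Pm assms(2,6) \<pi>Ts F(1) assms(4) F(3,4) Sm pm]
      let ?I = "\<integral>\<theta>. data_lik n x \<delta> (F \<theta>) \<partial>\<pi>T"
      have le: "ext_integral \<pi>T (\<lambda>\<theta>. Phi (F \<theta>) * data_lik n x \<delta> (F \<theta>)) \<le> ereal (r * ?I)"
      proof (rule ext_le[OF ps(1) data_lik_nonneg ps(5)])
        fix \<theta> show "Phi (F \<theta>) * data_lik n x \<delta> (F \<theta>) \<le> r * data_lik n x \<delta> (F \<theta>)"
        proof (cases "P \<theta> \<in> S")
          case True
          then have "Phi (F \<theta>) < r" using F(3) by (simp add: S_def)
          then show ?thesis by (intro mult_right_mono data_lik_nonneg) simp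
        next
          case False then show ?thesis using F(4) by simp
        qed
      qed
      have "lower_post Phi (Pi_alpha P PiT \<alpha>) n x \<delta> \<le> post_value Phi n x \<delta> (distr \<pi>T (prob_algebra borel) F)"
        unfolding lower_post_def using F(2) ps(2,3) by (intro Inf_lower) auto
      also have "\<dots> \<le> ereal r"
        unfolding ps(4) using ps(3) le by (subst ereal_divide_le_pos) (auto simp: mult.commute)
      finally show False using r by simp
    qed
  qed
qed

end
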